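(* Consider the delay differential system \[ \begin{aligned} \dot T(t)&= s-dT(t)+aT(t)\Big(1-\frac{T(t)+I(t)}{T_{\max}}\Big)-\frac{bT(t)V(t)}{1+\alpha V(t)},\\ \dot I(t)&= \frac{bT(t-\tau)V(t-\tau)}{1+\alpha V(t-\tau)}+aI(t)\Big(1-\frac{T(t)+I(t)}{T_{\max}}\Big)-\mu I(t),\\ \dot V(t)&= pI(t)-cV(t), \end{aligned} \] with positive constants $s,d,a,T_{\max},b,\alpha,\mu,p,c$ and $\tau\ge0$. Let \[ T_0=\frac{T_{\max}}{2a}\Big(a-d+\sqrt{(a-d)^2+\tfrac{4as}{T_{\max}}}\Big),\qquad R_0=\frac{1}{\mu}\Big[\frac{bpT_0}{c}+a\Big(1-\frac{T_0}{T_{\max}}\Big)\Big]. \] If $R_0>1$, then the system has a unique equilibrium $(T_2,I_2,V_2)$ with $T_2>0$, $I_2>0$, $V_2>0$ (an infected equilibrium).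
   Context: Equilibria are constant solutions of the system (they do not depend on $\tau$). $R_0$ is called the basic reproductive number. *)

theory Defs
  imports Complex_Main
begin

definition is_solution ::
  "real \<Rightarrow> real \<Rightarrow> real \<Rightarrow> real \<Rightarrow> real \<Rightarrow> real \<Rightarrow> real \<Rightarrow> real \<Rightarrow> real \<Rightarrow> real \<Rightarrow>
   (real \<Rightarrow> real) \<Rightarrow> (real \<Rightarrow> real) \<Rightarrow> (real \<Rightarrow> real) \<Rightarrow> bool" where
  "is_solution s d a Tmax b \<alpha> \<mu> p c \<tau> T I V \<longleftrightarrow>
     (\<forall>t. (T has_real_derivative
             (s - d * T t + a * T t * (1 - (T t + I t) / Tmax) - b * T t * V t / (1 + \<alpha> * V t))) (at t)
        \<and> (I has_real_derivative
             (b * T (t - \<tau>) * V (t - \<tau>) / (1 + \<alpha> * V (t - \<tau>))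
              + a * I t * (1 - (T t + I t) / Tmax) - \<mu> * I t)) (at t)
        \<and> (V has_real_derivative (p * I t - c * V t)) (at t))"

definition is_equilibrium ::
  "real \<Rightarrow> real \<Rightarrow> real \<Rightarrow> real \<Rightarrow> real \<Rightarrow> real \<Rightarrow> real \<Rightarrow> real \<Rightarrow> real \<Rightarrow> real \<Rightarrow>
   real \<times> real \<times> real \<Rightarrow> bool" where
  "is_equilibrium s d a Tmax b \<alpha> \<mu> p c \<tau> e \<longleftrightarrow>
     (case e of (T0, I0, V0) \<Rightarrow>
        is_solution s d a Tmax b \<alpha> \<mu> p c \<tau> (\<lambda>_. T0) (\<lambda>_. I0) (\<lambda>_. V0))"

definition T0_val :: "real \<Rightarrow> real \<Rightarrow> real \<Rightarrow> real \<Rightarrow> real" where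
  "T0_val s d a Tmax = Tmax / (2 * a) * (a - d + sqrt ((a - d)^2 + 4 * a * s / Tmax))"

definition R0_val ::
  "real \<Rightarrow> real \<Rightarrow> real \<Rightarrow> real \<Rightarrow> real \<Rightarrow> real \<Rightarrow> real \<Rightarrow> real \<Rightarrow> real" where
  "R0_val s d a Tmax b \<mu> p c =
     (1 / \<mu>) * (b * p * T0_val s d a Tmax / c + a * (1 - T0_val s d a Tmax / Tmax))"

end

theory Submission
  imports Defs
begin

lemma const_deriv_iff: "((\<lambda>_. k::real) has_real_derivative D) (at t) \<longleftrightarrow> D = 0"
  using DERIV_unique DERIV_const by blast

lemma equil_iff:
  "is_equilibrium s d a Tmax b \<alpha> \<mu> p c \<tau> (T, I, V) \<longleftrightarrow>
     s - d * T + a * T * (1 - (T + I) / Tmax) - b * T * V / (1 + \<alpha> * V) = 0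
   \<and> b * T * V / (1 + \<alpha> * V) + a * I * (1 - (T + I) / Tmax) - \<mu> * I = 0
   \<and> p * I - c * V = 0"
  unfolding is_equilibrium_def is_solution_def by (simp only: const_deriv_iff prod.case) simp

lemma quad_root:
  fixes A B s :: real
  assumes "A > 0" "s > 0"
  defines "t \<equiv> (sqrt (B^2 + 4*A*s) - B) / (2*A)"
  shows "A * t^2 + B * t - s = 0" "t > 0"
proof -
  define r where "r = sqrt (B^2 + 4*A*s)"
  have "4*A*s > 0" using assms by simp
  then have nn: "0 \<le> B^2 + 4*A*s" using zero_le_power2[of B] by linarith
  have r2: "r^2 = B^2 + 4*A*s" unfolding r_def by (rule real_sqrt_pow2[OF nn])
  have r0: "r \<ge> 0" unfolding r_def using nn by (rule real_sqrt_ge_zero)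
  have "A * t^2 + B * t - s = (r^2 - B^2 - 4*A*s) / (4*A)"
    unfolding t_def r_def[symmetric] using assms by (simp add: field_simps power2_eq_square)
  then show "A * t^2 + B * t - s = 0" using r2 by simp
  have "r > B" proof (rule ccontr)
    assume "\<not> r > B" then have "B \<ge> r" by simp
    then have "B^2 \<ge> r^2" using r0 by (simp add: power_mono)
    then show False using r2 assms by (smt (verit) mult_pos_pos)
  qed
  then show "t > 0" unfolding t_def r_def[symmetric] using assms by simp
qed

lemma uniq_lt:
  fixes s d a Tm mu T1 I1 T2 I2 h1 h2 :: real
  assumes pos: "s > 0" "a > 0" "Tm > 0" "T1 > 0" "T2 > 0" "I1 > 0" "I2 > 0"
    and lt: "I1 < I2" and hlt: "h1 > h2" "h2 > 0" and glt: "I1 * h1 < I2 * h2"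
    and F11: "s/T1 - d + a*(1-(T1+I1)/Tm) = I1*h1"
    and F12: "s/T2 - d + a*(1-(T2+I2)/Tm) = I2*h2"
    and F21: "T1*h1 + a*(1-(T1+I1)/Tm) = mu"
    and F22: "T2*h2 + a*(1-(T2+I2)/Tm) = mu"
  shows False
proof -
  have TT: "T1 > T2"
  proof (rule ccontr)
    assume "\<not> T1 > T2" then have le: "T1 \<le> T2" by simp
    have "s/T1 \<ge> s/T2" using le pos by (simp add: frac_le)
    moreover have "a*(T1+I1)/Tm < a*(T2+I2)/Tm" using le lt pos by (simp add: divide_strict_right_mono)
    ultimately show False using F11 F12 glt by (simp add: diff_divide_distrib algebra_simps)
  qed
  have "T1*h1 > T2*h2" using TT hlt pos by (simp add: mult_strict_mono)
  then have NN: "a*(T1+I1)/Tm > a*(T2+I2)/Tm" using F21 F22 by (simp add: algebra_simps diff_divide_distrib)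
  then have "T1+I1 > T2+I2" using pos by (auto simp: divide_less_cancel mult_less_cancel_left)
  then have "h1*(T1+I1) > h2*(T2+I2)" using hlt pos by (simp add: mult_strict_mono)
  moreover have "s/T1 < s/T2" using TT pos by (simp add: divide_strict_left_mono)
  moreover have "h1*(T1+I1) = mu - d + s/T1" using F11 F21 by (simp add: algebra_simps)
  moreover have "h2*(T2+I2) = mu - d + s/T2" using F12 F22 by (simp add: algebra_simps)
  ultimately show False by linarith
qed

theorem mainTheorem2:
  fixes s d a Tmax b \<alpha> \<mu> p c \<tau> :: real
  assumes "s > 0" "d > 0" "a > 0" "Tmax > 0" "b > 0" "\<alpha> > 0" "\<mu> > 0" "p > 0" "c > 0"
    and "\<tau> \<ge> 0"
    and "R0_val s d a Tmax b \<mu> p c > 1"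
  shows "\<exists>!e. is_equilibrium s d a Tmax b \<alpha> \<mu> p c \<tau> e
               \<and> fst e > 0 \<and> fst (snd e) > 0 \<and> snd (snd e) > 0"
proof -
  note pos = assms(1-9)
  define h where "h I = b*p/(c+\<alpha>*p*I)" for I
  define B where "B I = d - a + a*I/Tmax + I*h I" for I
  define A where "A = a/Tmax"
  define tau where "tau I = (sqrt ((B I)^2 + 4*A*s) - B I) / (2*A)" for I
  define Phi where "Phi I = h I * tau I + a*(1 - (tau I + I)/Tmax) - \<mu>" for I
  have A0: "A > 0" unfolding A_def using pos by simp
  have hpos: "h I > 0" if "I \<ge> 0" for I
    unfolding h_def using pos that by (simp add: add_pos_nonneg)
  have hle: "h I \<le> b*p/c" if "I \<ge> 0" for I
    unfolding h_def using pos that by (intro divide_left_mono) (auto simp: add_pos_nonneg)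
  have tq: "A * (tau I)^2 + B I * tau I - s = 0" and tpos: "tau I > 0" for I
    using quad_root[OF A0 pos(1), of "B I"] unfolding tau_def by auto
  have tau0: "tau 0 = T0_val s d a Tmax"
  proof -
    have B0: "B 0 = d - a" unfolding B_def by simp
    have sq: "(B 0)^2 + 4*A*s = (a-d)^2 + 4*a*s/Tmax" unfolding A_def B0 by (simp add: power2_commute)
    have "tau 0 = (sqrt ((a-d)^2 + 4*a*s/Tmax) - (d - a)) / (2*(a/Tmax))"
      unfolding tau_def sq by (simp add: B0 A_def)
    then show ?thesis unfolding T0_val_def using pos by (simp add: field_simps)
  qed
  have Phi0: "Phi 0 > 0"
  proof -
    have "(1/\<mu>) * (b*p*T0_val s d a Tmax/c + a*(1 - T0_val s d a Tmax/Tmax)) > 1"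
      using assms(11) unfolding R0_val_def .
    then have "b*p*T0_val s d a Tmax/c + a*(1 - T0_val s d a Tmax/Tmax) > \<mu>"
      using pos by (simp add: field_simps)
    then show ?thesis unfolding Phi_def tau0 h_def by simp
  qed
  define K where "K = Tmax + s/a"
  have tK: "tau I \<le> K" if "I \<ge> 0" for I
  proof (rule ccontr)
    assume "\<not> tau I \<le> K"
    then have gt: "tau I > Tmax + s/a" unfolding K_def by simp
    have "B I \<ge> -a" unfolding B_def using pos that hpos[OF that] by (simp add: add_nonneg_nonneg)
    then have "B I * tau I \<ge> -a * tau I" using tpos[of I] by (metis less_imp_le mult_minus_left mult_right_mono)
    then have q: "A * (tau I)^2 - a * tau I \<le> s" using tq[of I] by linarith
    have eqn: "A * (tau I)^2 - a * tau I = a * (tau I) * (tau I - Tmax) / Tmax"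
      unfolding A_def using pos by (simp add: field_simps power2_eq_square)
    have g1: "a * (tau I) * (tau I - Tmax) / Tmax > a * (tau I - Tmax)"
    proof -
      have sa: "s/a > 0" using pos by simp
      then have tg: "tau I > Tmax" using gt by linarith
      then have "tau I / Tmax > 1" using pos by simp
      moreover have "a * (tau I - Tmax) > 0" using tg pos by simp
      ultimately have "a * (tau I - Tmax) * (tau I / Tmax) > a * (tau I - Tmax) * 1"
        by (intro mult_strict_left_mono) auto
      then show ?thesis by (simp add: field_simps)
    qed
    have "a * (tau I - Tmax) > s" using gt pos by (simp add: field_simps)
    then show False using q eqn g1 by linarith
  qed
  define M where "M = Tmax / a * (b*p/c*K + a + 1)"
  have K0: "K > 0" unfolding K_def using pos by (simp add: add_pos_pos)
  have M0: "M \<ge> 0" unfolding M_def using pos K0 by simp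
  have PhiM: "Phi M < 0"
  proof -
    have "h M * tau M \<le> b*p/c*K" using hle[OF M0] tK[OF M0] hpos[OF M0] tpos[of M]
      pos by (meson less_imp_le mult_mono order.trans)
    moreover have "a*(1 - (tau M + M)/Tmax) \<le> a - a*M/Tmax"
      using tpos[of M] pos by (simp add: field_simps)
    moreover have "a*M/Tmax = b*p/c*K + a + 1" unfolding M_def using pos by simp
    ultimately show ?thesis unfolding Phi_def using pos by linarith
  qed
  have cont: "continuous_on {0..M} Phi"
  proof -
    have d0: "c + \<alpha>*p*x \<noteq> 0" if "x \<in> {0..M}" for x
    proof -
      have "\<alpha>*p*x \<ge> 0" using pos that by simp
      then show ?thesis using pos by linarith
    qed
    show ?thesis unfolding Phi_def tau_def B_def h_def
      using pos A0 d0 by (intro continuous_intros) auto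
  qed
  obtain I where I: "0 \<le> I" "I \<le> M" "Phi I = 0"
    using IVT2'[of Phi M 0 0] PhiM Phi0 M0 cont by auto
  have Ipos: "I > 0" using I Phi0 by (cases "I = 0") auto
  define T where "T = tau I"
  define V where "V = p*I/c"
  have Tp: "T > 0" unfolding T_def by (rule tpos)
  have Vp: "V > 0" unfolding V_def using pos Ipos by simp
  have btv: "b*T'*V'/(1+\<alpha>*V') = T'*I'*h I'" if "V' = p*I'/c" "I' \<ge> 0" for T' I' V'
    unfolding that h_def using pos that(2) by (simp add: field_simps add_pos_nonneg)
  show ?thesis
  proof (rule ex_ex1I)
    show "\<exists>e. is_equilibrium s d a Tmax b \<alpha> \<mu> p c \<tau> e \<and> fst e > 0 \<and> fst (snd e) > 0 \<and> snd (snd e) > 0"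
    proof (intro exI[of _ "(T, I, V)"] conjI)
      have e1: "s - d * T + a * T * (1 - (T + I) / Tmax) - T*I*h I = 0"
      proof -
        have "s - d * T + a * T * (1 - (T + I) / Tmax) - T*I*h I = -(A * T^2 + B I * T - s)"
          unfolding A_def B_def using pos by (simp add: field_simps power2_eq_square)
        then show ?thesis using tq[of I] unfolding T_def by simp
      qed
      have e2: "T*I*h I + a * I * (1 - (T + I) / Tmax) - \<mu> * I = 0"
      proof -
        have "T*I*h I + a * I * (1 - (T + I) / Tmax) - \<mu> * I = I * Phi I"
          unfolding Phi_def T_def by (simp add: algebra_simps)
        then show ?thesis using I by simp
      qed
      show "is_equilibrium s d a Tmax b \<alpha> \<mu> p c \<tau> (T, I, V)"
        unfolding equil_iff btv[OF V_def I(1)] using e1 e2 pos unfolding V_def by simp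
    qed (use Tp Ipos Vp in auto)
  next
    fix e1 e2
    assume H1: "is_equilibrium s d a Tmax b \<alpha> \<mu> p c \<tau> e1 \<and> fst e1 > 0 \<and> fst (snd e1) > 0 \<and> snd (snd e1) > 0"
      and H2: "is_equilibrium s d a Tmax b \<alpha> \<mu> p c \<tau> e2 \<and> fst e2 > 0 \<and> fst (snd e2) > 0 \<and> snd (snd e2) > 0"
    obtain T1 I1 V1 where e1: "e1 = (T1, I1, V1)" by (cases e1) auto
    obtain T2 I2 V2 where e2: "e2 = (T2, I2, V2)" by (cases e2) auto
    have facts: "T' > 0 \<and> I' > 0 \<and> V' = p*I'/c \<and>
        s/T' - d + a*(1-(T'+I')/Tmax) = I'*h I' \<and> T'*h I' + a*(1-(T'+I')/Tmax) = \<mu>"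
      if "is_equilibrium s d a Tmax b \<alpha> \<mu> p c \<tau> (T', I', V')" "T' > 0" "I' > 0" for T' I' V'
    proof -
      from that(1) have E: "s - d * T' + a * T' * (1 - (T' + I') / Tmax) - b * T' * V' / (1 + \<alpha> * V') = 0"
        "b * T' * V' / (1 + \<alpha> * V') + a * I' * (1 - (T' + I') / Tmax) - \<mu> * I' = 0"
        "p * I' - c * V' = 0" unfolding equil_iff by auto
      have V': "V' = p*I'/c" using E(3) pos by (simp add: field_simps)
      have b': "b * T' * V' / (1 + \<alpha> * V') = T'*I'*h I'" using btv[OF V'] that by simp
      have f1: "s/T' - d + a*(1-(T'+I')/Tmax) = I'*h I'"
      proof -
        have "s - d * T' + a * T' * (1 - (T' + I') / Tmax) - T'*I'*h I' = 0" using E(1) b' by simp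
        then have "(s - d * T' + a * T' * (1 - (T' + I') / Tmax) - T'*I'*h I') / T' = 0" by simp
        then show ?thesis using that(2) by (simp add: field_simps)
      qed
      have f2: "T'*h I' + a*(1-(T'+I')/Tmax) = \<mu>"
      proof -
        have "T'*I'*h I' + a * I' * (1 - (T' + I') / Tmax) - \<mu> * I' = 0" using E(2) b' by simp
        then have "I' * (T'*h I' + a*(1-(T'+I')/Tmax) - \<mu>) = 0" by (simp add: algebra_simps)
        then show ?thesis using that(3) by simp
      qed
      show ?thesis using that V' f1 f2 by auto
    qed
    have P1: "T1 > 0" "I1 > 0" "V1 = p*I1/c" "s/T1 - d + a*(1-(T1+I1)/Tmax) = I1*h I1"
        "T1*h I1 + a*(1-(T1+I1)/Tmax) = \<mu>" using facts[of T1 I1 V1] H1 e1 by auto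
    have P2: "T2 > 0" "I2 > 0" "V2 = p*I2/c" "s/T2 - d + a*(1-(T2+I2)/Tmax) = I2*h I2"
        "T2*h I2 + a*(1-(T2+I2)/Tmax) = \<mu>" using facts[of T2 I2 V2] H2 e2 by auto
    have mono: "h x > h y \<and> x * h x < y * h y" if "0 < x" "x < y" for x y
    proof
      show "h x > h y" unfolding h_def using pos that
        by (intro divide_strict_left_mono) (auto simp: add_pos_nonneg)
      have "x * (c + \<alpha>*p*y) < y * (c + \<alpha>*p*x)" using pos that by (simp add: algebra_simps)
      then have "x * (b*p) * (c + \<alpha>*p*y) < y * (b*p) * (c + \<alpha>*p*x)"
        using pos by (smt (verit) mult.commute mult.left_commute mult_pos_pos mult_strict_left_mono)
      then show "x * h x < y * h y" unfolding h_def using pos that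
        by (simp add: field_simps add_pos_nonneg)
    qed
    have II: "I1 = I2"
    proof (rule ccontr)
      assume "I1 \<noteq> I2"
      then consider "I1 < I2" | "I2 < I1" by linarith
      then show False
      proof cases
        case 1
        show False using uniq_lt[of s a Tmax T1 T2 I1 I2 "h I2" "h I1" d \<mu>] pos P1 P2 1 mono[OF P1(2) 1]
          hpos[of I2] by auto
      next
        case 2
        show False using uniq_lt[of s a Tmax T2 T1 I2 I1 "h I1" "h I2" d \<mu>] pos P1 P2 2 mono[OF P2(2) 2]
          hpos[of I1] by auto
      qed
    qed
    have TT: "T1 = T2"
    proof -
      have eq: "s/T1 - a*T1/Tmax = s/T2 - a*T2/Tmax" using P1(4) P2(4) II
        by (simp add: algebra_simps diff_divide_distrib add_divide_distrib)
      show ?thesis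
      proof (rule ccontr)
        assume "T1 \<noteq> T2"
        then consider "T1 < T2" | "T2 < T1" by linarith
        then show False
        proof cases
          case 1
          have "s/T1 > s/T2" using 1 P1 pos by (simp add: divide_strict_left_mono)
          moreover have "a*T1/Tmax < a*T2/Tmax" using 1 pos by (simp add: divide_strict_right_mono)
          ultimately show False using eq by linarith
        next
          case 2
          have "s/T2 > s/T1" using 2 P2 pos by (simp add: divide_strict_left_mono)
          moreover have "a*T2/Tmax < a*T1/Tmax" using 2 pos by (simp add: divide_strict_right_mono)
          ultimately show False using eq by linarith
        qed
      qed
    qed
    show "e1 = e2" using e1 e2 II TT P1(3) P2(3) by simp
  qed
qed

end
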